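(* For $t\in\{0,\delta,\dots,T\}$ let $v^t$ be the value function at time $t$ and $v_h^t$ its approximation given by the ideal max-plus finite element method. Then \[ \|v_h^T-v^T\|_\infty\leq\|P_{\mathcal W_h}(v^0)-v^0\|_\infty+\sum_{t\in\{\delta,2\delta,\dots,T\}}\|P_{\mathcal W_h}(P^{-\mathcal Z_h}(v^t))-v^t\|_\infty. \]
   Context: Optimal control setting: $X\subseteq\mathbb{R}^n$, $U\subseteq\mathbb{R}^m$, $\ell:X\times U\to\mathbb R$, $f:X\times U\to\mathbb{R}^n$, $T>0$, $\phi:X\to\mathbb{R}\cup\{-\infty\}$. For $t\ge0$ and $g:X\to\overline{\mathbb R}$, $S^tg(x)=\sup\{\int_0^t\ell(\mathbf x(s),\mathbf u(s))ds+g(\mathbf x(t))\}$ over measurable $\mathbf u:[0,t]\to U$ and absolutely continuous $\mathbf x:[0,t]\to X$ with $\dot{\mathbf x}=f(\mathbf x,\mathbf u)$ a.e. and $\mathbf x(0)=x$; value function $v^t=S^t\phi$. Arithmetic in $\overline{\mathbb R}=\mathbb{R}\cup\{\pm\infty\}$ with $-\infty$ absorbing for $+$; $a\backslash b=\max\{\lambda\in\overline{\mathbb{R}}:a+\lambda\leq b\}$. $\langle u,v\rangle=\sup_{x\in X}(u(x)+v(x))$. Finite elements $w_1,\dots,w_p$ and test functions $z_1,\dots,z_q$, functions $X\to\mathbb{R}\cup\{-\infty\}$. $W_h\lambda=\sup_i(w_i+\lambda_i)$; $(W_h\backslash g)_i=\inf_{x\in X}(w_i(x)\backslash g(x))$;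 $P_{\mathcal W_h}g=W_h(W_h\backslash g)$; $P^{-\mathcal Z_h}g(x)=\min_j\big(z_j(x)\backslash\langle z_j,g\rangle\big)$. For a matrix $A$: $(A\lambda)_j=\max_k(A_{jk}+\lambda_k)$, $(A\backslash\mu)_i=\min_jA_{ji}\backslash\mu_j$. Ideal max-plus finite element method: $N\geq1$, $\delta=T/N$, $(M_h)_{ji}=\langle z_j,w_i\rangle$, $(K_h)_{ji}=\langle z_j,S^\delta w_i\rangle$, $\lambda^0=W_h\backslash\phi$, $\lambda^{t+\delta}=M_h\backslash(K_h\lambda^t)$ for $t=0,\dots,T-\delta$, $v_h^t=W_h\lambda^t$. For $u,v:X\to\overline{\mathbb R}$, $\|u-v\|_\infty=\inf\{\lambda\geq0: v-\lambda\leq u\leq v+\lambda\}$ (equal to $\sup_{x}|u(x)-v(x)|$ when $u-v$ is finite-valued, $+\infty$ if no such $\lambda$). *)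

theory Defs
  imports "HOL-Analysis.Analysis" "HOL-Library.Extended_Real"
begin

definition mp_plus :: "ereal \<Rightarrow> ereal \<Rightarrow> ereal" where
  "mp_plus a b = (if a = -\<infinity> \<or> b = -\<infinity> then -\<infinity> else a + b)"

definition resid :: "ereal \<Rightarrow> ereal \<Rightarrow> ereal" where
  "resid a b = (GREATEST l. mp_plus a l \<le> b)"

definition mp_pair :: "'x set \<Rightarrow> ('x \<Rightarrow> ereal) \<Rightarrow> ('x \<Rightarrow> ereal) \<Rightarrow> ereal" where
  "mp_pair X u v = (SUP x\<in>X. mp_plus (u x) (v x))"

definition Wop :: "nat \<Rightarrow> (nat \<Rightarrow> 'x \<Rightarrow> ereal) \<Rightarrow> (nat \<Rightarrow> ereal) \<Rightarrow> 'x \<Rightarrow> ereal" where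
  "Wop p w lam = (\<lambda>x. SUP i\<in>{..<p}. mp_plus (w i x) (lam i))"

definition Wres :: "'x set \<Rightarrow> (nat \<Rightarrow> 'x \<Rightarrow> ereal) \<Rightarrow> ('x \<Rightarrow> ereal) \<Rightarrow> nat \<Rightarrow> ereal" where
  "Wres X w g = (\<lambda>i. INF x\<in>X. resid (w i x) (g x))"

definition PW :: "'x set \<Rightarrow> nat \<Rightarrow> (nat \<Rightarrow> 'x \<Rightarrow> ereal) \<Rightarrow> ('x \<Rightarrow> ereal) \<Rightarrow> 'x \<Rightarrow> ereal" where
  "PW X p w g = Wop p w (Wres X w g)"

definition PZ :: "'x set \<Rightarrow> nat \<Rightarrow> (nat \<Rightarrow> 'x \<Rightarrow> ereal) \<Rightarrow> ('x \<Rightarrow> ereal) \<Rightarrow> 'x \<Rightarrow> ereal" where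
  "PZ X q z g = (\<lambda>x. Min ((\<lambda>j. resid (z j x) (mp_pair X (z j) g)) ` {..<q}))"

definition mat_app :: "nat \<Rightarrow> (nat \<Rightarrow> nat \<Rightarrow> ereal) \<Rightarrow> (nat \<Rightarrow> ereal) \<Rightarrow> nat \<Rightarrow> ereal" where
  "mat_app p A lam = (\<lambda>j. Max ((\<lambda>k. mp_plus (A j k) (lam k)) ` {..<p}))"

definition mat_res :: "nat \<Rightarrow> (nat \<Rightarrow> nat \<Rightarrow> ereal) \<Rightarrow> (nat \<Rightarrow> ereal) \<Rightarrow> nat \<Rightarrow> ereal" where
  "mat_res q A mu = (\<lambda>i. Min ((\<lambda>j. resid (A j i) (mu j)) ` {..<q}))"

(* ||u - v||_inf = inf { lambda \<ge> 0 : v - lambda \<le> u \<le> v + lambda on X }, +\<infinity> if no such lambda *)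
definition sup_dist :: "'x set \<Rightarrow> ('x \<Rightarrow> ereal) \<Rightarrow> ('x \<Rightarrow> ereal) \<Rightarrow> ereal" where
  "sup_dist X u v = Inf (ereal ` {l::real. l \<ge> 0 \<and>
      (\<forall>x\<in>X. v x - ereal l \<le> u x \<and> u x \<le> v x + ereal l)})"

definition abs_cont_on :: "real \<Rightarrow> real \<Rightarrow> (real \<Rightarrow> 'a::real_normed_vector) \<Rightarrow> bool" where
  "abs_cont_on a b g \<longleftrightarrow> (\<forall>e>0. \<exists>d>0. \<forall>(n::nat) (c::nat\<Rightarrow>real) (e'::nat\<Rightarrow>real).
      (\<forall>k<n. a \<le> c k \<and> c k \<le> e' k \<and> e' k \<le> b) \<and>
      (\<forall>k<n. \<forall>l<n. k \<noteq> l \<longrightarrow> e' k \<le> c l \<or> e' l \<le> c k) \<and>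
      (\<Sum>k<n. e' k - c k) < d \<longrightarrow> (\<Sum>k<n. norm (g (e' k) - g (c k))) < e)"

definition admissible ::
  "('n set) \<Rightarrow> ('m set) \<Rightarrow> ('n::euclidean_space \<Rightarrow> 'm::euclidean_space \<Rightarrow> 'n) \<Rightarrow>
   (real \<Rightarrow> 'm) \<Rightarrow> (real \<Rightarrow> 'n) \<Rightarrow> real \<Rightarrow> 'n \<Rightarrow> bool" where
  "admissible X U f uu xx t x0 \<longleftrightarrow>
     uu \<in> borel_measurable (restrict_space lebesgue {0..t}) \<and>
     (\<forall>s\<in>{0..t}. uu s \<in> U) \<and>
     (\<forall>s\<in>{0..t}. xx s \<in> X) \<and>
     abs_cont_on 0 t xx \<and>
     (AE s in lebesgue. s \<in> {0..t} \<longrightarrow>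
        (xx has_vector_derivative f (xx s) (uu s)) (at s within {0..t})) \<and>
     xx 0 = x0"

definition Ssem ::
  "('n set) \<Rightarrow> ('m set) \<Rightarrow> ('n::euclidean_space \<Rightarrow> 'm::euclidean_space \<Rightarrow> real) \<Rightarrow>
   ('n \<Rightarrow> 'm \<Rightarrow> 'n) \<Rightarrow> real \<Rightarrow> ('n \<Rightarrow> ereal) \<Rightarrow> 'n \<Rightarrow> ereal" where
  "Ssem X U ell f t g x0 = Sup {mp_plus (ereal (LINT s:{0..t}|lborel. ell (xx s) (uu s))) (g (xx t)) | uu xx.
       admissible X U f uu xx t x0 \<and> set_integrable lborel {0..t} (\<lambda>s. ell (xx s) (uu s))}"

definition Mh :: "'x set \<Rightarrow> (nat \<Rightarrow> 'x \<Rightarrow> ereal) \<Rightarrow> (nat \<Rightarrow> 'x \<Rightarrow> ereal) \<Rightarrow> nat \<Rightarrow> nat \<Rightarrow> ereal" where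
  "Mh X z w = (\<lambda>j i. mp_pair X (z j) (w i))"

definition Kh ::
  "('n set) \<Rightarrow> ('m set) \<Rightarrow> ('n::euclidean_space \<Rightarrow> 'm::euclidean_space \<Rightarrow> real) \<Rightarrow>
   ('n \<Rightarrow> 'm \<Rightarrow> 'n) \<Rightarrow> real \<Rightarrow> (nat \<Rightarrow> 'n \<Rightarrow> ereal) \<Rightarrow> (nat \<Rightarrow> 'n \<Rightarrow> ereal) \<Rightarrow> nat \<Rightarrow> nat \<Rightarrow> ereal" where
  "Kh X U ell f \<delta> z w = (\<lambda>j i. mp_pair X (z j) (Ssem X U ell f \<delta> (w i)))"

definition fem_coeffs ::
  "('n set) \<Rightarrow> ('m set) \<Rightarrow> ('n::euclidean_space \<Rightarrow> 'm::euclidean_space \<Rightarrow> real) \<Rightarrow>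
   ('n \<Rightarrow> 'm \<Rightarrow> 'n) \<Rightarrow> real \<Rightarrow> nat \<Rightarrow> nat \<Rightarrow> (nat \<Rightarrow> 'n \<Rightarrow> ereal) \<Rightarrow> (nat \<Rightarrow> 'n \<Rightarrow> ereal) \<Rightarrow>
   ('n \<Rightarrow> ereal) \<Rightarrow> nat \<Rightarrow> nat \<Rightarrow> ereal" where
  "fem_coeffs X U ell f \<delta> p q w z \<phi> k =
     ((\<lambda>lam. mat_res q (Mh X z w) (mat_app p (Kh X U ell f \<delta> z w) lam)) ^^ k) (Wres X w \<phi>)"

definition fem_value ::
  "('n set) \<Rightarrow> ('m set) \<Rightarrow> ('n::euclidean_space \<Rightarrow> 'm::euclidean_space \<Rightarrow> real) \<Rightarrow>
   ('n \<Rightarrow> 'm \<Rightarrow> 'n) \<Rightarrow> real \<Rightarrow> nat \<Rightarrow> nat \<Rightarrow> (nat \<Rightarrow> 'n \<Rightarrow> ereal) \<Rightarrow> (nat \<Rightarrow> 'n \<Rightarrow> ereal) \<Rightarrow>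
   ('n \<Rightarrow> ereal) \<Rightarrow> nat \<Rightarrow> 'n \<Rightarrow> ereal" where
  "fem_value X U ell f \<delta> p q w z \<phi> k = Wop p w (fem_coeffs X U ell f \<delta> p q w z \<phi> k)"

end

theory Submission
  imports Defs
begin

lemma mp_plus_comm: "mp_plus a b = mp_plus b a"
  by (auto simp: mp_plus_def add.commute)

lemma mp_plus_assoc: "mp_plus (mp_plus a b) c = mp_plus a (mp_plus b c)"
  unfolding mp_plus_def by (cases a; cases b; cases c) auto

lemma mp_plus_mono: "a \<le> a' \<Longrightarrow> b \<le> b' \<Longrightarrow> mp_plus a b \<le> mp_plus a' b'"
  unfolding mp_plus_def by (cases a; cases b; cases a'; cases b') auto

lemma mp_plus_fin: "c \<noteq> -\<infinity> \<Longrightarrow> c \<noteq> \<infinity> \<Longrightarrow> mp_plus a c = a + c"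
  unfolding mp_plus_def by (cases a; cases c) auto

lemma mp_plus_ereal: "mp_plus a (ereal c) = a + ereal c"
  by (simp add: mp_plus_fin)

lemma mp_plus_ereal_minus: "mp_plus a (ereal (-c)) = a - ereal c"
  unfolding mp_plus_def by (cases a) auto

definition rr :: "ereal \<Rightarrow> ereal \<Rightarrow> ereal" where
  "rr a b = (if a = -\<infinity> then \<infinity> else if a = \<infinity> then (if b = \<infinity> then \<infinity> else -\<infinity>) else b - a)"

lemma rr_galois: "mp_plus a l \<le> b \<longleftrightarrow> l \<le> rr a b"
  unfolding mp_plus_def rr_def
  by (cases a; cases b; cases l) (auto simp: ereal_le_minus_iff algebra_simps)

lemma resid_rr: "resid a b = rr a b"
  unfolding resid_def
  by (rule Greatest_equality) (auto simp: rr_galois)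

lemma resid_galois: "mp_plus a l \<le> b \<longleftrightarrow> l \<le> resid a b"
  by (simp add: resid_rr rr_galois)

lemma mp_plus_Sup: "mp_plus a (Sup S) = Sup (mp_plus a ` S)"
proof (rule antisym)
  show "mp_plus a (Sup S) \<le> Sup (mp_plus a ` S)"
    by (subst resid_galois, rule Sup_least) (metis SUP_upper resid_galois)
  show "Sup (mp_plus a ` S) \<le> mp_plus a (Sup S)"
    by (rule SUP_least, rule mp_plus_mono) (auto intro: Sup_upper)
qed

lemma mp_plus_SUP: "mp_plus a (SUP i\<in>I. g i) = (SUP i\<in>I. mp_plus a (g i))"
  by (simp add: mp_plus_Sup image_image)

lemma mp_plus_SUP2: "mp_plus (SUP i\<in>I. g i) a = (SUP i\<in>I. mp_plus (g i) a)"
  by (simp add: mp_plus_comm[of _ a] mp_plus_SUP)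

lemma resid_assoc: "resid a (resid b c) = resid (mp_plus b a) c"
proof -
  have "\<And>l. l \<le> resid a (resid b c) \<longleftrightarrow> l \<le> resid (mp_plus b a) c"
    by (simp add: resid_galois[symmetric] mp_plus_assoc)
  then show ?thesis by (meson order_antisym order_refl)
qed

lemma resid_INF: "(INF i\<in>I. resid (g i) c) = resid (SUP i\<in>I. g i) c"
proof -
  have "\<And>l. l \<le> (INF i\<in>I. resid (g i) c) \<longleftrightarrow> l \<le> resid (SUP i\<in>I. g i) c"
    by (simp add: le_INF_iff resid_galois[symmetric] mp_plus_SUP2 SUP_le_iff)
  then show ?thesis by (meson order_antisym order_refl)
qed

lemma resid_INF2: "resid a (INF i\<in>I. g i) = (INF i\<in>I. resid a (g i))"
proof -
  have "\<And>l. l \<le> (INF i\<in>I. resid a (g i)) \<longleftrightarrow> l \<le> resid a (INF i\<in>I. g i)"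
    by (simp add: le_INF_iff resid_galois[symmetric])
  then show ?thesis by (meson order_antisym order_refl)
qed

lemma resid_mono2: "b \<le> b' \<Longrightarrow> resid a b \<le> resid a b'"
  by (metis resid_galois order_refl order_trans)

lemma resid_add: "resid a (b + ereal c) \<le> resid a b + ereal c"
proof -
  have "mp_plus a (resid a (b + ereal c) + ereal (-c)) \<le> b"
  proof -
    have "mp_plus a (resid a (b + ereal c)) \<le> b + ereal c" by (simp add: resid_galois)
    then have "mp_plus (mp_plus a (resid a (b + ereal c))) (ereal (-c)) \<le> mp_plus (b + ereal c) (ereal (-c))"
      by (rule mp_plus_mono) simp
    moreover have "mp_plus (b + ereal c) (ereal (-c)) = b" by (cases b) (auto simp: mp_plus_ereal)
    moreover have "mp_plus (mp_plus a (resid a (b + ereal c))) (ereal (-c)) = mp_plus a (resid a (b + ereal c) + ereal (-c))"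
      by (simp only: mp_plus_assoc) (simp add: mp_plus_ereal)
    ultimately show ?thesis by simp
  qed
  then have "resid a (b + ereal c) + ereal (-c) \<le> resid a b" by (simp add: resid_galois)
  then show ?thesis by (cases "resid a (b + ereal c)"; cases "resid a b") auto
qed

lemma ereal_add_minus_cancel: "(y + ereal c) - ereal c = (y::ereal)" "(y - ereal c) + ereal c = (y::ereal)"
  by (cases y; simp)+

lemma INF_add_le: "(INF x\<in>A. r x + ereal c) \<le> (INF x\<in>A. r x) + ereal (c::real)"
proof -
  have "(INF x\<in>A. r x + ereal c) - ereal c \<le> (INF x\<in>A. r x)"
  proof (rule INF_greatest)
    fix x assume "x \<in> A"
    then have "(INF x\<in>A. r x + ereal c) \<le> r x + ereal c" by (rule INF_lower)
    then show "(INF x\<in>A. r x + ereal c) - ereal c \<le> r x"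
      by (metis ereal_add_minus_cancel(1) ereal_minus_mono order_refl)
  qed
  then have "((INF x\<in>A. r x + ereal c) - ereal c) + ereal c \<le> (INF x\<in>A. r x) + ereal c"
    by (simp add: add_right_mono)
  then show ?thesis by (simp add: ereal_add_minus_cancel)
qed

definition DD :: "'x set \<Rightarrow> ('x \<Rightarrow> ereal) \<Rightarrow> ('x \<Rightarrow> ereal) \<Rightarrow> real \<Rightarrow> bool" where
  "DD X u v l \<longleftrightarrow> l \<ge> 0 \<and> (\<forall>x\<in>X. v x - ereal l \<le> u x \<and> u x \<le> v x + ereal l)"

lemma sup_dist_DD: "sup_dist X u v = Inf (ereal ` {l. DD X u v l})"
  unfolding sup_dist_def DD_def by simp

lemma sup_dist_nonneg: "0 \<le> sup_dist X u v"
  unfolding sup_dist_DD by (rule Inf_greatest) (auto simp: DD_def)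

lemma sup_dist_mono:
  assumes "\<And>l. DD X u v l \<Longrightarrow> DD X u' v' l"
  shows "sup_dist X u' v' \<le> sup_dist X u v"
  unfolding sup_dist_DD by (rule Inf_superset_mono) (use assms in auto)

lemma sup_dist_self: "sup_dist X u u = 0"
proof -
  have "DD X u u 0" by (simp add: DD_def)
  then have "sup_dist X u u \<le> 0" unfolding sup_dist_DD
    by (metis (mono_tags, lifting) Inf_lower image_eqI mem_Collect_eq zero_ereal_def)
  then show ?thesis using sup_dist_nonneg[of X u u] by simp
qed

lemma DD_trans:
  assumes a: "DD X u v l1" and b: "DD X v w l2" shows "DD X u w (l1 + l2)"
proof -
  have l: "l1 \<ge> 0" "l2 \<ge> 0" using a b by (auto simp: DD_def)
  have "w x - ereal (l1 + l2) \<le> u x \<and> u x \<le> w x + ereal (l1 + l2)" if x: "x \<in> X" for x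
  proof
    have "w x - ereal (l1 + l2) = (w x - ereal l2) - ereal l1" by (cases "w x") auto
    also have "\<dots> \<le> v x - ereal l1" using a b x by (simp add: ereal_minus_mono DD_def)
    also have "\<dots> \<le> u x" using a x by (simp add: DD_def)
    finally show "w x - ereal (l1 + l2) \<le> u x" .
    have "u x \<le> v x + ereal l1" using a x by (simp add: DD_def)
    also have "\<dots> \<le> (w x + ereal l2) + ereal l1" using b x by (simp add: add_right_mono DD_def)
    also have "\<dots> = w x + ereal (l1 + l2)" by (cases "w x") auto
    finally show "u x \<le> w x + ereal (l1 + l2)" .
  qed
  then show ?thesis using l by (simp add: DD_def)
qed

lemma sup_dist_tri: "sup_dist X u w \<le> sup_dist X u v + sup_dist X v w"
proof -
  define A where "A = {l. DD X u v l}"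
  define B where "B = {l. DD X v w l}"
  show ?thesis
  proof (cases "A = {} \<or> B = {}")
    case True
    have e: "sup_dist X u v = Inf (ereal ` A)" "sup_dist X v w = Inf (ereal ` B)"
      unfolding sup_dist_DD A_def B_def by auto
    from True have "sup_dist X u v = \<infinity> \<or> sup_dist X v w = \<infinity>"
      unfolding e by (auto simp: top_ereal_def[symmetric])
    then show ?thesis using sup_dist_nonneg[of X u v] sup_dist_nonneg[of X v w] by auto
  next
    case False
    have "sup_dist X u w \<le> (INF l1\<in>A. (INF l2\<in>B. ereal l1 + ereal l2))"
      unfolding sup_dist_DD
      by (intro INF_greatest Inf_lower) (auto simp: A_def B_def intro: DD_trans)
    also have "\<dots> = (INF l1\<in>A. ereal l1 + (INF l2\<in>B. ereal l2))"
      using False by (intro INF_cong refl INF_ereal_add_right) (auto simp: B_def DD_def)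
    also have "\<dots> = (INF l1\<in>A. ereal l1) + (INF l2\<in>B. ereal l2)"
    proof (rule INF_ereal_add_left)
      have "0 \<le> (INF l2\<in>B. ereal l2)" by (rule INF_greatest) (auto simp: B_def DD_def)
      then show "(INF l2\<in>B. ereal l2) \<noteq> -\<infinity>" by auto
    qed (use False in \<open>auto simp: A_def DD_def\<close>)
    also have "\<dots> = sup_dist X u v + sup_dist X v w"
      by (simp add: sup_dist_DD A_def B_def)
    finally show ?thesis .
  qed
qed

definition nonexp :: "'x set \<Rightarrow> (('x \<Rightarrow> ereal) \<Rightarrow> ('x \<Rightarrow> ereal)) \<Rightarrow> bool" where
  "nonexp X P \<longleftrightarrow> (\<forall>g h. (\<forall>x\<in>X. g x \<le> h x) \<longrightarrow> (\<forall>x\<in>X. P g x \<le> P h x)) \<and>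
     (\<forall>g c. \<forall>x\<in>X. P (\<lambda>y. g y + ereal c) x \<le> P g x + ereal c)"

lemma nonexp_DD:
  assumes "nonexp X P" "DD X u v l" shows "DD X (P u) (P v) l"
proof -
  have mono: "\<And>g h. (\<forall>x\<in>X. g x \<le> h x) \<Longrightarrow> \<forall>x\<in>X. P g x \<le> P h x"
    and sh: "\<And>g c x. x \<in> X \<Longrightarrow> P (\<lambda>y. g y + ereal c) x \<le> P g x + ereal c"
    using assms(1) unfolding nonexp_def by blast+
  have sh2: "P g x + ereal c \<le> P (\<lambda>y. g y + ereal c) x" if "x \<in> X" for g c x
  proof -
    have "P g x = P (\<lambda>y. (g y + ereal c) + ereal (-c)) x"
      by (rule arg_cong[where f="\<lambda>h. P h x"]) (auto simp: fun_eq_iff intro: sym, case_tac "g x", auto)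
    also have "\<dots> \<le> P (\<lambda>y. g y + ereal c) x + ereal (-c)" by (rule sh[OF that])
    finally have "P g x + ereal c \<le> (P (\<lambda>y. g y + ereal c) x + ereal (-c)) + ereal c"
      by (simp add: add_right_mono)
    also have "\<dots> = P (\<lambda>y. g y + ereal c) x" by (cases "P (\<lambda>y. g y + ereal c) x") auto
    finally show ?thesis .
  qed
  have l: "l \<ge> 0" and b1: "\<forall>x\<in>X. v x + ereal (-l) \<le> u x" and b2: "\<forall>x\<in>X. u x \<le> v x + ereal l"
    using assms(2) unfolding DD_def by (auto simp: minus_ereal_def)
  have "\<forall>x\<in>X. P (\<lambda>y. v y + ereal (-l)) x \<le> P u x" using mono[OF b1] .
  moreover have "\<forall>x\<in>X. P u x \<le> P (\<lambda>y. v y + ereal l) x" using mono[OF b2] .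
  ultimately have "\<forall>x\<in>X. P v x + ereal (-l) \<le> P u x \<and> P u x \<le> P v x + ereal l"
    using sh sh2 by (meson order_trans)
  then show ?thesis using l unfolding DD_def by (simp add: minus_ereal_def)
qed

lemma nonexp_sup_dist: "nonexp X P \<Longrightarrow> sup_dist X (P u) (P v) \<le> sup_dist X u v"
  by (rule sup_dist_mono) (rule nonexp_DD)

lemma nonexp_comp:
  assumes "nonexp X P" "nonexp X Q" shows "nonexp X (\<lambda>g. P (Q g))"
proof -
  have mP: "\<And>g h. (\<forall>x\<in>X. g x \<le> h x) \<Longrightarrow> \<forall>x\<in>X. P g x \<le> P h x"
    and sP: "\<And>g c x. x \<in> X \<Longrightarrow> P (\<lambda>y. g y + ereal c) x \<le> P g x + ereal c"
    using assms(1) unfolding nonexp_def by blast+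
  have mQ: "\<And>g h. (\<forall>x\<in>X. g x \<le> h x) \<Longrightarrow> \<forall>x\<in>X. Q g x \<le> Q h x"
    and sQ: "\<And>g c x. x \<in> X \<Longrightarrow> Q (\<lambda>y. g y + ereal c) x \<le> Q g x + ereal c"
    using assms(2) unfolding nonexp_def by blast+
  have "P (Q (\<lambda>y. g y + ereal c)) x \<le> P (Q g) x + ereal c" if "x \<in> X" for g c x
  proof -
    have "P (Q (\<lambda>y. g y + ereal c)) x \<le> P (\<lambda>y. Q g y + ereal c) x"
      using mP[of "Q (\<lambda>y. g y + ereal c)" "\<lambda>y. Q g y + ereal c"] sQ that by blast
    also have "\<dots> \<le> P (Q g) x + ereal c" using sP that by blast
    finally show ?thesis .
  qed
  then show ?thesis unfolding nonexp_def using mP mQ by blast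
qed

definition adm_set where
  "adm_set X U ell f t x0 = {(uu,xx). admissible X U f uu xx t x0 \<and>
      set_integrable lborel {0..t} (\<lambda>s. ell (xx s) (uu s))}"

definition JJ :: "('n \<Rightarrow> 'm \<Rightarrow> real) \<Rightarrow> real \<Rightarrow> (real \<Rightarrow> 'm) \<Rightarrow> (real \<Rightarrow> 'n) \<Rightarrow> real" where
  "JJ ell t uu xx = (LINT s:{0..t}|lborel. ell (xx s) (uu s))"

lemma Ssem_SUP: "Ssem X U ell f t g x0 =
   (SUP q\<in>adm_set X U ell f t x0. mp_plus (ereal (JJ ell t (fst q) (snd q))) (g (snd q t)))"
proof -
  have *: "{F uu xx | uu xx. P uu xx} = (\<lambda>q. F (fst q) (snd q)) ` {(uu,xx). P uu xx}" for F P
    by force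
  show ?thesis unfolding Ssem_def adm_set_def JJ_def * by simp
qed

lemma Ssem_lin: "Ssem X U ell f t (\<lambda>y. SUP k\<in>K. mp_plus (g k y) (c k)) x
   = (SUP k\<in>K. mp_plus (Ssem X U ell f t (g k) x) (c k))"
  unfolding Ssem_SUP mp_plus_SUP mp_plus_SUP2
  by (subst SUP_commute) (simp add: mp_plus_assoc)

lemma Ssem_shift: "Ssem X U ell f t (\<lambda>y. mp_plus (g y) c) x = mp_plus (Ssem X U ell f t g x) c"
  unfolding Ssem_SUP mp_plus_SUP2 by (simp add: mp_plus_assoc)

lemma adm_set_X: "q \<in> adm_set X U ell f t x0 \<Longrightarrow> t \<ge> 0 \<Longrightarrow> snd q t \<in> X"
  unfolding adm_set_def admissible_def by auto

lemma nonexp_Ssem: "t \<ge> 0 \<Longrightarrow> nonexp X (Ssem X U ell f t)"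
  unfolding nonexp_def
proof (intro conjI allI impI ballI)
  fix g h :: "_ \<Rightarrow> ereal" and x assume t: "t \<ge> 0" and gh: "\<forall>x\<in>X. g x \<le> h x"
  show "Ssem X U ell f t g x \<le> Ssem X U ell f t h x"
    unfolding Ssem_SUP
    by (rule SUP_mono) (use gh adm_set_X[OF _ t] in \<open>blast intro: mp_plus_mono\<close>)
next
  fix g :: "_ \<Rightarrow> ereal" and c x
  show "Ssem X U ell f t (\<lambda>y. g y + ereal c) x \<le> Ssem X U ell f t g x + ereal c"
    using Ssem_shift[of X U ell f t g "ereal c" x] by (simp add: mp_plus_ereal)
qed

lemma Wop_shift: "Wop p w (\<lambda>i. l i + ereal c) x = Wop p w l x + ereal c"
  unfolding Wop_def
  by (simp add: mp_plus_ereal[symmetric] mp_plus_assoc[symmetric] mp_plus_SUP2)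

lemma Wop_mono: "(\<And>i. l i \<le> l' i) \<Longrightarrow> Wop p w l x \<le> Wop p w l' x"
  unfolding Wop_def by (rule SUP_mono) (blast intro: mp_plus_mono)

lemma nonexp_PW: "nonexp X (PW X p w)"
  unfolding nonexp_def PW_def
proof (intro conjI allI impI ballI)
  fix g h :: "_ \<Rightarrow> ereal" and x assume gh: "\<forall>x\<in>X. g x \<le> h x"
  show "Wop p w (Wres X w g) x \<le> Wop p w (Wres X w h) x"
    by (rule Wop_mono) (unfold Wres_def, rule INF_mono, use gh in \<open>blast intro: resid_mono2\<close>)
next
  fix g :: "_ \<Rightarrow> ereal" and c x
  have "Wres X w (\<lambda>y. g y + ereal c) i \<le> Wres X w g i + ereal c" for i
  proof -
    have "Wres X w (\<lambda>y. g y + ereal c) i \<le> (INF y\<in>X. resid (w i y) (g y) + ereal c)"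
      unfolding Wres_def by (rule INF_mono) (blast intro: resid_add)
    also have "\<dots> \<le> Wres X w g i + ereal c" unfolding Wres_def by (rule INF_add_le)
    finally show ?thesis .
  qed
  then have "Wop p w (Wres X w (\<lambda>y. g y + ereal c)) x \<le> Wop p w (\<lambda>i. Wres X w g i + ereal c) x"
    by (rule Wop_mono)
  then show "Wop p w (Wres X w (\<lambda>y. g y + ereal c)) x \<le> Wop p w (Wres X w g) x + ereal c"
    by (simp add: Wop_shift)
qed

lemma PZ_INF: "q \<ge> 1 \<Longrightarrow> PZ X q z g x = (INF j\<in>{..<q}. resid (z j x) (mp_pair X (z j) g))"
  unfolding PZ_def by (subst cInf_eq_Min) (auto simp: lessThan_empty_iff)

lemma mp_pair_shift: "mp_pair X h (\<lambda>y. g y + ereal c) = mp_pair X h g + ereal c"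
  unfolding mp_pair_def
  by (simp add: mp_plus_ereal[symmetric] mp_plus_assoc[symmetric] mp_plus_SUP2)

lemma nonexp_PZ: "q \<ge> 1 \<Longrightarrow> nonexp X (PZ X q z)"
  unfolding nonexp_def
proof (intro conjI allI impI ballI)
  fix g h :: "_ \<Rightarrow> ereal" and x assume q: "q \<ge> 1" and gh: "\<forall>x\<in>X. g x \<le> h x"
  have "mp_pair X (z j) g \<le> mp_pair X (z j) h" for j
    unfolding mp_pair_def by (rule SUP_mono) (use gh in \<open>blast intro: mp_plus_mono\<close>)
  then show "PZ X q z g x \<le> PZ X q z h x"
    unfolding PZ_INF[OF q] by (intro INF_mono) (blast intro: resid_mono2)
next
  fix g :: "_ \<Rightarrow> ereal" and c x assume q: "q \<ge> 1"
  have "PZ X q z (\<lambda>y. g y + ereal c) x \<le> (INF j\<in>{..<q}. resid (z j x) (mp_pair X (z j) g) + ereal c)"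
    unfolding PZ_INF[OF q] mp_pair_shift by (rule INF_mono) (blast intro: resid_add)
  also have "\<dots> \<le> PZ X q z g x + ereal c" unfolding PZ_INF[OF q] by (rule INF_add_le)
  finally show "PZ X q z (\<lambda>y. g y + ereal c) x \<le> PZ X q z g x + ereal c" .
qed

lemma fem_value_0: "fem_value X U ell f d p q w z \<phi> 0 = PW X p w \<phi>"
  unfolding fem_value_def fem_coeffs_def PW_def by simp

lemma fem_coeffs_Suc: "fem_coeffs X U ell f d p q w z \<phi> (Suc k) =
   mat_res q (Mh X z w) (mat_app p (Kh X U ell f d z w) (fem_coeffs X U ell f d p q w z \<phi> k))"
  unfolding fem_coeffs_def by simp

lemma key_identity:
  assumes p: "p \<ge> 1" and q: "q \<ge> 1"
  shows "fem_value X U ell f d p q w z \<phi> (Suc k) =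
     PW X p w (PZ X q z (Ssem X U ell f d (fem_value X U ell f d p q w z \<phi> k)))"
proof -
  define lam where "lam = fem_coeffs X U ell f d p q w z \<phi> k"
  define G where "G = Ssem X U ell f d (Wop p w lam)"
  have mu: "mat_app p (Kh X U ell f d z w) lam j = mp_pair X (z j) G" for j
  proof -
    have "mp_pair X (z j) G = (SUP x\<in>X. SUP i\<in>{..<p}. mp_plus (mp_plus (z j x) (Ssem X U ell f d (w i) x)) (lam i))"
      unfolding mp_pair_def G_def Wop_def Ssem_lin mp_plus_SUP mp_plus_assoc ..
    also have "\<dots> = (SUP i\<in>{..<p}. mp_plus (Kh X U ell f d z w j i) (lam i))"
      unfolding Kh_def mp_pair_def mp_plus_SUP2 by (rule SUP_commute)
    also have "\<dots> = mat_app p (Kh X U ell f d z w) lam j"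
      unfolding mat_app_def using p by (subst cSup_eq_Max) (auto simp: lessThan_empty_iff)
    finally show ?thesis by simp
  qed
  have "Wres X w (PZ X q z G) i = mat_res q (Mh X z w) (mat_app p (Kh X U ell f d z w) lam) i" for i
  proof -
    have "Wres X w (PZ X q z G) i = (INF x\<in>X. INF j\<in>{..<q}. resid (mp_plus (z j x) (w i x)) (mp_pair X (z j) G))"
      unfolding Wres_def PZ_INF[OF q] resid_INF2 resid_assoc ..
    also have "\<dots> = (INF j\<in>{..<q}. resid (Mh X z w j i) (mp_pair X (z j) G))"
      unfolding Mh_def mp_pair_def resid_INF[symmetric] by (rule INF_commute)
    also have "\<dots> = mat_res q (Mh X z w) (mat_app p (Kh X U ell f d z w) lam) i"
      unfolding mat_res_def mu using q by (subst cInf_eq_Min) (auto simp: lessThan_empty_iff)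
    finally show ?thesis .
  qed
  then have eq: "Wres X w (PZ X q z G) = mat_res q (Mh X z w) (mat_app p (Kh X U ell f d z w) lam)"
    by (rule ext)
  show ?thesis
    unfolding fem_value_def fem_coeffs_Suc lam_def[symmetric] PW_def
    by (simp add: eq[unfolded G_def])
qed

lemma Ssem_empty: assumes "U = {}" "t \<ge> 0" shows "Ssem X U ell f t g = (\<lambda>x. -\<infinity>)"
proof -
  have "adm_set X U ell f t x = {}" for x
    using assms unfolding adm_set_def admissible_def by fastforce
  then show ?thesis unfolding Ssem_SUP by (simp add: fun_eq_iff bot_ereal_def)
qed

lemma indicator_00: "indicator {0..0::real} x *\<^sub>R h x = (h (0::real)::real) * indicator {0} x"
  by (auto simp: indicator_def)

lemma JJ_0: "JJ ell 0 uu xx = 0"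
proof -
  have "(\<lambda>s. indicator {0..0} s *\<^sub>R ell (xx s) (uu s)) = (\<lambda>s. ell (xx 0) (uu 0) * indicator {0::real} s)"
    by (auto simp: indicator_def fun_eq_iff)
  then show ?thesis unfolding JJ_def set_lebesgue_integral_def
    by (simp add: integral_mult_right_zero)
qed

lemma integrable_0: "set_integrable lborel {0..0::real} (h :: real \<Rightarrow> real)"
  unfolding set_integrable_def indicator_00
  by (intro integrable_mult_right integrable_real_indicator) auto

lemma Ssem_0: assumes "x \<in> X" "U \<noteq> {}" shows "Ssem X U ell f 0 g x = g x"
proof (rule antisym)
  show "Ssem X U ell f 0 g x \<le> g x"
    unfolding Ssem_SUP JJ_0 by (rule SUP_least) (auto simp: adm_set_def admissible_def mp_plus_def)
next
  obtain u0 where u0: "u0 \<in> U" using assms by auto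
  have "AE s in lborel. s \<noteq> (0::real)" by (rule AE_lborel_singleton)
  then have ae: "AE s in lebesgue. s \<in> {0..0} \<longrightarrow> ((\<lambda>_. x) has_vector_derivative f x u0) (at s within {0..0})"
    unfolding AE_completion_iff by (rule eventually_mono) auto
  have ac: "abs_cont_on 0 0 (\<lambda>_. x)"
    unfolding abs_cont_on_def by (auto intro: exI[of _ 1])
  have "((\<lambda>_. u0), (\<lambda>_. x)) \<in> adm_set X U ell f 0 x"
    unfolding adm_set_def admissible_def using ae ac u0 assms(1) integrable_0 by auto
  then show "g x \<le> Ssem X U ell f 0 g x"
    unfolding Ssem_SUP by (rule SUP_upper2) (simp add: JJ_0 mp_plus_def zero_ereal_def[symmetric])
qed

lemma sing_integrable: "set_integrable lborel {c::real} (g :: real \<Rightarrow> real)"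
proof -
  have "(\<lambda>x. indicator {c} x *\<^sub>R g x) = (\<lambda>x. g c * indicator {c} x)"
    by (auto simp: indicator_def fun_eq_iff)
  then show ?thesis unfolding set_integrable_def
    by (simp add: integrable_mult_right)
qed

lemma sing_integral: "(LINT x:{c::real}|lborel. (g :: real \<Rightarrow> real) x) = 0"
proof -
  have "(\<lambda>x. indicator {c} x *\<^sub>R g x) = (\<lambda>x. g c * indicator {c} x)"
    by (auto simp: indicator_def fun_eq_iff)
  then show ?thesis unfolding set_lebesgue_integral_def
    by (simp add: integral_mult_right_zero)
qed

lemma shift_integrable:
  fixes g :: "real \<Rightarrow> real"
  shows "set_integrable lborel {a..a+b} g \<longleftrightarrow> set_integrable lborel {0..b} (\<lambda>s. g (a + s))"
proof -
  have "(\<lambda>x. (\<lambda>x. indicator {a..a+b} x *\<^sub>R g x) (a + 1 * x)) = (\<lambda>x. indicator {0..b} x *\<^sub>R g (a + x))"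
    by (auto simp: indicator_def fun_eq_iff)
  then show ?thesis unfolding set_integrable_def
    using lborel_integrable_real_affine_iff[of 1 "\<lambda>x. indicator {a..a+b} x *\<^sub>R g x" a] by simp
qed

lemma shift_integral:
  fixes g :: "real \<Rightarrow> real"
  shows "(LINT s:{a..a+b}|lborel. g s) = (LINT s:{0..b}|lborel. g (a + s))"
proof -
  have "(\<lambda>x. (\<lambda>x. indicator {a..a+b} x *\<^sub>R g x) (a + 1 * x)) = (\<lambda>x. indicator {0..b} x *\<^sub>R g (a + x))"
    by (auto simp: indicator_def fun_eq_iff)
  then show ?thesis unfolding set_lebesgue_integral_def
    using lborel_integral_real_affine[of 1 "\<lambda>x. indicator {a..a+b} x *\<^sub>R g x" a] by simp
qed

lemma split_integral:
  fixes g :: "real \<Rightarrow> real"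
  assumes ab: "0 \<le> a" "0 \<le> b" and I: "set_integrable lborel {0..a+b} g"
  shows "set_integrable lborel {0..a} g" "set_integrable lborel {0..b} (\<lambda>s. g (a + s))"
    "(LINT s:{0..a+b}|lborel. g s) = (LINT s:{0..a}|lborel. g s) + (LINT s:{0..b}|lborel. g (a + s))"
proof -
  show I1: "set_integrable lborel {0..a} g"
    by (rule set_integrable_subset[OF I]) (use ab in auto)
  have I2: "set_integrable lborel {a..a+b} g"
    by (rule set_integrable_subset[OF I]) (use ab in auto)
  then show "set_integrable lborel {0..b} (\<lambda>s. g (a + s))" by (simp add: shift_integrable)
  have I3: "set_integrable lborel {0..<a} g"
    by (rule set_integrable_subset[OF I]) (use ab in auto)
  have e1: "{0..a+b} = {0..<a} \<union> {a..a+b}" using ab by auto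
  have e2: "{0..a} = {0..<a} \<union> {a}" using ab by auto
  have "(LINT s:{0..a+b}|lborel. g s) = (LINT s:{0..<a}|lborel. g s) + (LINT s:{a..a+b}|lborel. g s)"
    unfolding e1 by (rule set_integral_Un) (use I2 I3 in auto)
  moreover have "(LINT s:{0..a}|lborel. g s) = (LINT s:{0..<a}|lborel. g s)"
    unfolding e2 by (subst set_integral_Un) (auto simp: I3 sing_integrable sing_integral)
  ultimately show "(LINT s:{0..a+b}|lborel. g s) = (LINT s:{0..a}|lborel. g s) + (LINT s:{0..b}|lborel. g (a + s))"
    by (simp add: shift_integral)
qed

lemma concat_integral:
  fixes g1 g2 :: "real \<Rightarrow> real"
  assumes ab: "0 \<le> a" "0 \<le> b" and I1: "set_integrable lborel {0..a} g1"
    and I2: "set_integrable lborel {0..b} g2"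
    and h: "\<And>s. h s = (if s \<le> a then g1 s else g2 (s - a))"
  shows "set_integrable lborel {0..a+b} h"
    "(LINT s:{0..a+b}|lborel. h s) = (LINT s:{0..a}|lborel. g1 s) + (LINT s:{0..b}|lborel. g2 s)"
proof -
  have J1: "set_integrable lborel {0..a} h"
    using I1 by (subst set_integrable_cong[where f'=g1]) (auto simp: h)
  have K1: "(LINT s:{0..a}|lborel. h s) = (LINT s:{0..a}|lborel. g1 s)"
    by (rule set_lebesgue_integral_cong) (auto simp: h)
  have I2': "set_integrable lborel {a..a+b} (\<lambda>s. g2 (s - a))"
    using I2 by (simp add: shift_integrable)
  have J2': "set_integrable lborel {a<..a+b} (\<lambda>s. g2 (s - a))"
    by (rule set_integrable_subset[OF I2']) auto
  have J2: "set_integrable lborel {a<..a+b} h"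
    using J2'
    by (subst set_integrable_cong[where f'="\<lambda>s. g2 (s - a)"]) (auto simp: h)
  have K2: "(LINT s:{a<..a+b}|lborel. h s) = (LINT s:{a<..a+b}|lborel. g2 (s - a))"
    by (rule set_lebesgue_integral_cong) (auto simp: h)
  have e2: "{a..a+b} = {a} \<union> {a<..a+b}" using ab by auto
  have K3: "(LINT s:{a..a+b}|lborel. g2 (s - a)) = (LINT s:{a<..a+b}|lborel. g2 (s - a))"
    unfolding e2 using J2'
    by (subst set_integral_Un) (auto simp: sing_integrable sing_integral)
  have e1: "{0..a+b} = {0..a} \<union> {a<..a+b}" using ab by auto
  show "set_integrable lborel {0..a+b} h"
    unfolding e1 by (rule set_integrable_Un) (use J1 J2 in auto)
  have "(LINT s:{0..a+b}|lborel. h s) = (LINT s:{0..a}|lborel. h s) + (LINT s:{a<..a+b}|lborel. h s)"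
    unfolding e1 by (rule set_integral_Un) (use J1 J2 in auto)
  also have "\<dots> = (LINT s:{0..a}|lborel. g1 s) + (LINT s:{0..b}|lborel. g2 s)"
    unfolding K1 K2 K3[symmetric] shift_integral by simp
  finally show "(LINT s:{0..a+b}|lborel. h s) = (LINT s:{0..a}|lborel. g1 s) + (LINT s:{0..b}|lborel. g2 s)" .
qed

lemma lebesgue_translate_meas: "(\<lambda>s::real. c + s) \<in> lebesgue \<rightarrow>\<^sub>M lebesgue"
proof (rule measurableI)
  fix A :: "real set" assume A: "A \<in> sets lebesgue"
  have "(\<lambda>s. c + s) -` A \<inter> space lebesgue = (\<lambda>x. -c + x) ` A" by force
  then show "(\<lambda>s. c + s) -` A \<inter> space lebesgue \<in> sets lebesgue"
    using lebesgue_sets_translation[OF A, of "-c"] by simp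
qed simp

lemma AE_translate:
  assumes "AE s in lebesgue. P s" shows "AE s in lebesgue. P (c + s::real)"
proof -
  from assms have "AE s in lborel. P s" by (simp add: AE_completion_iff)
  then obtain N where N: "{x \<in> space lborel. \<not> P x} \<subseteq> N" "emeasure lborel N = 0" "N \<in> sets lborel"
    by (auto elim: AE_E)
  then have "N \<in> null_sets lborel" by (simp add: null_setsI)
  then have N2: "{x. x - (-c) \<in> N} \<in> null_sets lborel" by (rule null_sets_translation)
  have "AE s in lborel. P (c + s)"
    by (rule AE_I'[OF N2]) (use N(1) in \<open>auto simp: add.commute\<close>)
  then show ?thesis by (simp add: AE_completion_iff)
qed

lemma deriv_shift: "((\<lambda>s::real. c + s) has_vector_derivative 1) (at s within S)"
  unfolding has_real_derivative_iff_has_vector_derivative[symmetric]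
  by (auto intro!: derivative_eq_intros)

lemma adm_parts:
  assumes "admissible X U f uu xx t x0"
  shows "uu \<in> borel_measurable (restrict_space lebesgue {0..t})" "\<forall>s\<in>{0..t}. uu s \<in> U"
    "\<forall>s\<in>{0..t}. xx s \<in> X" "abs_cont_on 0 t xx"
    "AE s in lebesgue. s \<in> {0..t} \<longrightarrow> (xx has_vector_derivative f (xx s) (uu s)) (at s within {0..t})"
    "xx 0 = x0"
  using assms unfolding admissible_def by blast+

lemma adm_intro:
  assumes "uu \<in> borel_measurable (restrict_space lebesgue {0..t})" "\<forall>s\<in>{0..t}. uu s \<in> U"
    "\<forall>s\<in>{0..t}. xx s \<in> X" "abs_cont_on 0 t xx"
    "AE s in lebesgue. s \<in> {0..t} \<longrightarrow> (xx has_vector_derivative f (xx s) (uu s)) (at s within {0..t})"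
    "xx 0 = x0"
  shows "admissible X U f uu xx t x0"
  using assms unfolding admissible_def by blast

lemma adm_restrict:
  assumes adm: "admissible X U f uu xx t x0" and t: "0 \<le> t'" "t' \<le> t"
  shows "admissible X U f uu xx t' x0"
proof (rule adm_intro)
  note P = adm_parts[OF adm]
  show "abs_cont_on 0 t' xx"
    unfolding abs_cont_on_def
  proof (intro allI impI)
    fix e :: real assume "e > 0"
    then obtain d where d: "d > 0" and H0: "\<forall>(n::nat) c e'. (\<forall>k<n. 0 \<le> c k \<and> c k \<le> e' k \<and> e' k \<le> t) \<and>
      (\<forall>k<n. \<forall>l<n. k \<noteq> l \<longrightarrow> e' k \<le> c l \<or> e' l \<le> c k) \<and>
      (\<Sum>k<n. e' k - c k) < d \<longrightarrow> (\<Sum>k<n. norm (xx (e' k) - xx (c k))) < e"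
      using P(4)[unfolded abs_cont_on_def, rule_format, of e] by blast
    note H = H0[rule_format]
    show "\<exists>d>0. \<forall>(n::nat) c e'. (\<forall>k<n. 0 \<le> c k \<and> c k \<le> e' k \<and> e' k \<le> t') \<and>
      (\<forall>k<n. \<forall>l<n. k \<noteq> l \<longrightarrow> e' k \<le> c l \<or> e' l \<le> c k) \<and>
      (\<Sum>k<n. e' k - c k) < d \<longrightarrow> (\<Sum>k<n. norm (xx (e' k) - xx (c k))) < e"
    proof (intro exI[of _ d] conjI allI impI d)
      fix n :: nat and c e' assume A: "(\<forall>k<n. 0 \<le> c k \<and> c k \<le> e' k \<and> (e' k::real) \<le> t') \<and>
        (\<forall>k<n. \<forall>l<n. k \<noteq> l \<longrightarrow> e' k \<le> c l \<or> e' l \<le> c k) \<and> (\<Sum>k<n. e' k - c k) < d"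
      then have "\<forall>k<n. 0 \<le> c k \<and> c k \<le> e' k \<and> e' k \<le> t" using t(2) by auto
      then show "(\<Sum>k<n. norm (xx (e' k) - xx (c k))) < e" using H[of n c e'] A by blast
    qed
  qed
  show "uu \<in> borel_measurable (restrict_space lebesgue {0..t'})"
    by (rule measurable_restrict_mono[OF P(1)]) (use t in auto)
  show "AE s in lebesgue. s \<in> {0..t'} \<longrightarrow>
        (xx has_vector_derivative f (xx s) (uu s)) (at s within {0..t'})"
    by (rule eventually_mono[OF P(5)]) (use t in \<open>auto intro: has_vector_derivative_within_subset\<close>)
  show "\<forall>s\<in>{0..t'}. uu s \<in> U" using P(2) t by auto
  show "\<forall>s\<in>{0..t'}. xx s \<in> X" using P(3) t by auto
  show "xx 0 = x0" using P(6) .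
qed

lemma adm_shift:
  assumes adm: "admissible X U f uu xx (a + b) x0" and ab: "0 \<le> a" "0 \<le> b"
  shows "admissible X U f (\<lambda>s. uu (a + s)) (\<lambda>s. xx (a + s)) b (xx a)"
proof (rule adm_intro)
  note P = adm_parts[OF adm]
  show "abs_cont_on 0 b (\<lambda>s. xx (a + s))"
    unfolding abs_cont_on_def
  proof (intro allI impI)
    fix e :: real assume "e > 0"
    then obtain d where d: "d > 0" and H0: "\<forall>(n::nat) c e'. (\<forall>k<n. 0 \<le> c k \<and> c k \<le> e' k \<and> e' k \<le> a + b) \<and>
      (\<forall>k<n. \<forall>l<n. k \<noteq> l \<longrightarrow> e' k \<le> c l \<or> e' l \<le> c k) \<and>
      (\<Sum>k<n. e' k - c k) < d \<longrightarrow> (\<Sum>k<n. norm (xx (e' k) - xx (c k))) < e"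
      using P(4)[unfolded abs_cont_on_def, rule_format, of e] by blast
    note H = H0[rule_format]
    show "\<exists>d>0. \<forall>(n::nat) c e'. (\<forall>k<n. 0 \<le> c k \<and> c k \<le> e' k \<and> e' k \<le> b) \<and>
      (\<forall>k<n. \<forall>l<n. k \<noteq> l \<longrightarrow> e' k \<le> c l \<or> e' l \<le> c k) \<and>
      (\<Sum>k<n. e' k - c k) < d \<longrightarrow> (\<Sum>k<n. norm (xx (a + e' k) - xx (a + c k))) < e"
    proof (intro exI[of _ d] conjI allI impI d)
      fix n :: nat and c e' assume A: "(\<forall>k<n. 0 \<le> c k \<and> c k \<le> e' k \<and> (e' k::real) \<le> b) \<and>
        (\<forall>k<n. \<forall>l<n. k \<noteq> l \<longrightarrow> e' k \<le> c l \<or> e' l \<le> c k) \<and> (\<Sum>k<n. e' k - c k) < d"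
      have "(\<Sum>k<n. (a + e' k) - (a + c k)) = (\<Sum>k<n. e' k - c k)" by simp
      moreover have "\<forall>k<n. 0 \<le> a + c k \<and> a + c k \<le> a + e' k \<and> a + e' k \<le> a + b" using A ab by auto
      moreover have "\<forall>k<n. \<forall>l<n. k \<noteq> l \<longrightarrow> a + e' k \<le> a + c l \<or> a + e' l \<le> a + c k" using A by auto
      ultimately show "(\<Sum>k<n. norm (xx (a + e' k) - xx (a + c k))) < e"
        using H[of n "\<lambda>k. a + c k" "\<lambda>k. a + e' k"] A by simp
    qed
  qed
  show "(\<lambda>s. uu (a + s)) \<in> borel_measurable (restrict_space lebesgue {0..b})"
  proof -
    have "(\<lambda>s. a + s) \<in> restrict_space lebesgue {0..b} \<rightarrow>\<^sub>M restrict_space lebesgue {0..a+b}"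
      by (rule measurable_restrict_space3[OF lebesgue_translate_meas]) (use ab in auto)
    then show ?thesis using P(1) by (rule measurable_compose)
  qed
  show "AE s in lebesgue. s \<in> {0..b} \<longrightarrow>
        ((\<lambda>s. xx (a + s)) has_vector_derivative f (xx (a + s)) (uu (a + s))) (at s within {0..b})"
  proof -
    have "AE s in lebesgue. a + s \<in> {0..a+b} \<longrightarrow>
        (xx has_vector_derivative f (xx (a + s)) (uu (a + s))) (at (a + s) within {0..a+b})"
      using P(5) by (rule AE_translate)
    then show ?thesis
    proof (rule eventually_mono, intro impI)
      fix s assume H: "a + s \<in> {0..a + b} \<longrightarrow>
          (xx has_vector_derivative f (xx (a + s)) (uu (a + s))) (at (a + s) within {0..a + b})"
        and s: "s \<in> {0..b}"
      have im: "(\<lambda>s. a + s) ` {0..b} = {a..a+b}"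
      proof
        show "{a..a+b} \<subseteq> (\<lambda>s. a + s) ` {0..b}"
        proof
          fix y assume "y \<in> {a..a+b}"
          then show "y \<in> (\<lambda>s. a + s) ` {0..b}" by (intro image_eqI[of _ _ "y - a"]) auto
        qed
      qed auto
      have "(xx has_vector_derivative f (xx (a + s)) (uu (a + s))) (at (a + s) within {a..a + b})"
        using H s ab by (auto intro: has_vector_derivative_within_subset)
      then have "((xx \<circ> (\<lambda>s. a + s)) has_vector_derivative (1 *\<^sub>R f (xx (a + s)) (uu (a + s)))) (at s within {0..b})"
        by (intro vector_diff_chain_within deriv_shift) (simp only: im)
      then show "((\<lambda>s. xx (a + s)) has_vector_derivative f (xx (a + s)) (uu (a + s))) (at s within {0..b})"
        by (simp add: o_def)
    qed
  qed
  show "\<forall>s\<in>{0..b}. uu (a + s) \<in> U" using P(2) ab by auto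
  show "\<forall>s\<in>{0..b}. xx (a + s) \<in> X" using P(3) ab by auto
  show "xx (a + 0) = xx a" by simp
qed

lemma concat_tri:
  fixes x1 x2 :: "real \<Rightarrow> 'a::real_normed_vector"
  assumes "c \<le> e" "x2 0 = x1 a"
  shows "norm ((if e \<le> a then x1 e else x2 (e - a)) - (if c \<le> a then x1 c else x2 (c - a)))
    \<le> norm (x1 (min e a) - x1 (min c a)) + norm (x2 (max e a - a) - x2 (max c a - a))"
proof (cases "e \<le> a")
  case True
  then show ?thesis using assms by (simp add: min_def max_def)
next
  case False
  show ?thesis
  proof (cases "c \<le> a")
    case True
    have "x2 (e - a) - x1 c = (x1 a - x1 c) + (x2 (e - a) - x2 0)" using assms by simp
    then have "norm (x2 (e - a) - x1 c) \<le> norm (x1 a - x1 c) + norm (x2 (e - a) - x2 0)"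
      by (metis norm_triangle_ineq)
    then show ?thesis using True False by (simp add: min_def max_def)
  next
    case c: False
    then show ?thesis using False assms by (simp add: min_def max_def)
  qed
qed

lemma abs_cont_get:
  fixes g :: "real \<Rightarrow> 'a::real_normed_vector"
  assumes "abs_cont_on a b g" "e > 0"
  shows "\<exists>d>0. \<forall>(n::nat) c e'. (\<forall>k<n. a \<le> c k \<and> c k \<le> e' k \<and> e' k \<le> b) \<and>
      (\<forall>k<n. \<forall>l<n. k \<noteq> l \<longrightarrow> e' k \<le> c l \<or> e' l \<le> c k) \<and>
      (\<Sum>k<n. e' k - c k) < d \<longrightarrow> (\<Sum>k<n. norm (g (e' k) - g (c k))) < e"
  by (rule mp[OF spec[OF assms(1)[unfolded abs_cont_on_def], of e] assms(2)])

lemma abs_cont_concat: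
  fixes x1 x2 :: "real \<Rightarrow> 'a::real_normed_vector"
  assumes ac1: "abs_cont_on 0 a x1" and ac2: "abs_cont_on 0 b x2" and ab: "0 \<le> a" "0 \<le> b"
    and x: "x2 0 = x1 a"
  shows "abs_cont_on 0 (a + b) (\<lambda>s. if s \<le> a then x1 s else x2 (s - a))"
  unfolding abs_cont_on_def
proof (intro allI impI)
  fix e :: real assume e: "e > 0"
  obtain d1 where d1: "d1 > 0" and H10: "\<forall>(n::nat) c e'. (\<forall>k<n. 0 \<le> c k \<and> c k \<le> e' k \<and> e' k \<le> a) \<and>
      (\<forall>k<n. \<forall>l<n. k \<noteq> l \<longrightarrow> e' k \<le> c l \<or> e' l \<le> c k) \<and>
      (\<Sum>k<n. e' k - c k) < d1 \<longrightarrow> (\<Sum>k<n. norm (x1 (e' k) - x1 (c k))) < e / 2"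
    using abs_cont_get[OF ac1 half_gt_zero[OF e]] by blast
  have H1: "(\<Sum>k<n. norm (x1 (e' k) - x1 (c k))) < e / 2"
    if "\<forall>k<n. 0 \<le> c k \<and> c k \<le> e' k \<and> e' k \<le> a" "\<forall>k<n. \<forall>l<n. k \<noteq> l \<longrightarrow> e' k \<le> c l \<or> e' l \<le> c k"
      "(\<Sum>k<n. e' k - c k) < d1" for n :: nat and c e'
    using H10 that by blast
  obtain d2 where d2: "d2 > 0" and H20: "\<forall>(n::nat) c e'. (\<forall>k<n. 0 \<le> c k \<and> c k \<le> e' k \<and> e' k \<le> b) \<and>
      (\<forall>k<n. \<forall>l<n. k \<noteq> l \<longrightarrow> e' k \<le> c l \<or> e' l \<le> c k) \<and>
      (\<Sum>k<n. e' k - c k) < d2 \<longrightarrow> (\<Sum>k<n. norm (x2 (e' k) - x2 (c k))) < e / 2"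
    using abs_cont_get[OF ac2 half_gt_zero[OF e]] by blast
  have H2: "(\<Sum>k<n. norm (x2 (e' k) - x2 (c k))) < e / 2"
    if "\<forall>k<n. 0 \<le> c k \<and> c k \<le> e' k \<and> e' k \<le> b" "\<forall>k<n. \<forall>l<n. k \<noteq> l \<longrightarrow> e' k \<le> c l \<or> e' l \<le> c k"
      "(\<Sum>k<n. e' k - c k) < d2" for n :: nat and c e'
    using H20 that by blast
  show "\<exists>d>0. \<forall>(n::nat) c e'. (\<forall>k<n. 0 \<le> c k \<and> c k \<le> e' k \<and> e' k \<le> a + b) \<and>
      (\<forall>k<n. \<forall>l<n. k \<noteq> l \<longrightarrow> e' k \<le> c l \<or> e' l \<le> c k) \<and>
      (\<Sum>k<n. e' k - c k) < d \<longrightarrow>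
      (\<Sum>k<n. norm ((if e' k \<le> a then x1 (e' k) else x2 (e' k - a)) - (if c k \<le> a then x1 (c k) else x2 (c k - a)))) < e"
  proof (intro exI[of _ "min d1 d2"] conjI allI impI)
    show "min d1 d2 > 0" using d1 d2 by simp
    fix n :: nat and c e' assume A: "(\<forall>k<n. 0 \<le> c k \<and> c k \<le> e' k \<and> (e' k::real) \<le> a + b) \<and>
        (\<forall>k<n. \<forall>l<n. k \<noteq> l \<longrightarrow> e' k \<le> c l \<or> e' l \<le> c k) \<and> (\<Sum>k<n. e' k - c k) < min d1 d2"
    have A1: "\<forall>k<n. 0 \<le> c k \<and> c k \<le> e' k \<and> (e' k::real) \<le> a + b" using A by blast
    have A2: "\<forall>k<n. \<forall>l<n. k \<noteq> l \<longrightarrow> e' k \<le> c l \<or> e' l \<le> c k" using A by blast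
    have A3: "(\<Sum>k<n. e' k - c k) < min d1 d2" using A by blast
    have S1: "(\<Sum>k<n. norm (x1 (min (e' k) a) - x1 (min (c k) a))) < e / 2"
    proof (rule H1)
      show "\<forall>k<n. 0 \<le> min (c k) a \<and> min (c k) a \<le> min (e' k) a \<and> min (e' k) a \<le> a"
        using A1 ab by (auto simp: min_def)
      show "\<forall>k<n. \<forall>l<n. k \<noteq> l \<longrightarrow> min (e' k) a \<le> min (c l) a \<or> min (e' l) a \<le> min (c k) a"
      proof (intro allI impI)
        fix k l assume "k < n" "l < n" "k \<noteq> l"
        then have "e' k \<le> c l \<or> e' l \<le> c k" using A2 by blast
        then show "min (e' k) a \<le> min (c l) a \<or> min (e' l) a \<le> min (c k) a"
          by (meson min.mono order_refl)
      qed
      have "(\<Sum>k<n. min (e' k) a - min (c k) a) \<le> (\<Sum>k<n. e' k - c k)"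
        by (rule sum_mono) (use A1 in \<open>auto simp: min_def\<close>)
      then show "(\<Sum>k<n. min (e' k) a - min (c k) a) < d1" using A3 by simp
    qed
    have S2: "(\<Sum>k<n. norm (x2 (max (e' k) a - a) - x2 (max (c k) a - a))) < e / 2"
    proof (rule H2)
      show "\<forall>k<n. 0 \<le> max (c k) a - a \<and> max (c k) a - a \<le> max (e' k) a - a \<and> max (e' k) a - a \<le> b"
        using A1 ab by (auto simp: max_def)
      show "\<forall>k<n. \<forall>l<n. k \<noteq> l \<longrightarrow> max (e' k) a - a \<le> max (c l) a - a \<or> max (e' l) a - a \<le> max (c k) a - a"
      proof (intro allI impI)
        fix k l assume "k < n" "l < n" "k \<noteq> l"
        then have "e' k \<le> c l \<or> e' l \<le> c k" using A2 by blast
        then show "max (e' k) a - a \<le> max (c l) a - a \<or> max (e' l) a - a \<le> max (c k) a - a"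
          by (meson diff_right_mono max.mono order_refl)
      qed
      have "(\<Sum>k<n. (max (e' k) a - a) - (max (c k) a - a)) \<le> (\<Sum>k<n. e' k - c k)"
        by (rule sum_mono) (use A1 in \<open>auto simp: max_def\<close>)
      then show "(\<Sum>k<n. (max (e' k) a - a) - (max (c k) a - a)) < d2" using A3 by simp
    qed
    have "(\<Sum>k<n. norm ((if e' k \<le> a then x1 (e' k) else x2 (e' k - a)) - (if c k \<le> a then x1 (c k) else x2 (c k - a))))
       \<le> (\<Sum>k<n. norm (x1 (min (e' k) a) - x1 (min (c k) a)) + norm (x2 (max (e' k) a - a) - x2 (max (c k) a - a)))"
    proof (rule sum_mono)
      fix k assume "k \<in> {..<n}"
      then have "c k \<le> e' k" using A1 by auto
      then show "norm ((if e' k \<le> a then x1 (e' k) else x2 (e' k - a)) - (if c k \<le> a then x1 (c k) else x2 (c k - a)))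
       \<le> norm (x1 (min (e' k) a) - x1 (min (c k) a)) + norm (x2 (max (e' k) a - a) - x2 (max (c k) a - a))"
        using x by (rule concat_tri)
    qed
    also have "\<dots> < e" using S1 S2 by (simp add: sum.distrib)
    finally show "(\<Sum>k<n. norm ((if e' k \<le> a then x1 (e' k) else x2 (e' k - a)) - (if c k \<le> a then x1 (c k) else x2 (c k - a)))) < e" .
  qed
qed

lemma adm_concat:
  assumes a1: "admissible X U f u1 x1 a x0" and a2: "admissible X U f u2 x2 b (x1 a)"
    and ab: "0 \<le> a" "0 \<le> b"
  shows "admissible X U f (\<lambda>s. if s \<le> a then u1 s else u2 (s - a))
     (\<lambda>s. if s \<le> a then x1 s else x2 (s - a)) (a + b) x0"
proof (rule adm_intro)
  note P1 = adm_parts[OF a1] and P2 = adm_parts[OF a2]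
  define uu where "uu = (\<lambda>s. if s \<le> a then u1 s else u2 (s - a))"
  define xx where "xx = (\<lambda>s. if s \<le> a then x1 s else x2 (s - a))"
  show "abs_cont_on 0 (a + b) (\<lambda>s. if s \<le> a then x1 s else x2 (s - a))"
    by (rule abs_cont_concat[OF P1(4) P2(4) ab P2(6)])
  show "\<forall>s\<in>{0..a + b}. (if s \<le> a then u1 s else u2 (s - a)) \<in> U"
    using P1(2) P2(2) ab by auto
  show "\<forall>s\<in>{0..a + b}. (if s \<le> a then x1 s else x2 (s - a)) \<in> X"
    using P1(3) P2(3) ab by auto
  show "(if (0::real) \<le> a then x1 0 else x2 (0 - a)) = x0" using P1(6) ab by simp
  show "(\<lambda>s. if s \<le> a then u1 s else u2 (s - a)) \<in> borel_measurable (restrict_space lebesgue {0..a + b})"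
  proof -
    have m1: "(\<lambda>s. indicator {0..a} s *\<^sub>R u1 s) \<in> borel_measurable lebesgue"
      using P1(1) by (subst (asm) borel_measurable_restrict_space_iff) auto
    have m2: "(\<lambda>s. indicator {0..b} s *\<^sub>R u2 s) \<in> borel_measurable lebesgue"
      using P2(1) by (subst (asm) borel_measurable_restrict_space_iff) auto
    have m2': "(\<lambda>s. indicator {0..b} (-a + s) *\<^sub>R u2 (-a + s)) \<in> borel_measurable lebesgue"
      using measurable_compose[OF lebesgue_translate_meas[of "-a"] m2] by simp
    have m3: "(\<lambda>s. indicator {a<..a+b} s *\<^sub>R (indicator {0..b} (-a + s) *\<^sub>R u2 (-a + s))) \<in> borel_measurable lebesgue"
      by (intro borel_measurable_scaleR borel_measurable_indicator m2') auto
    have eq: "(\<lambda>s. indicator {0..a+b} s *\<^sub>R (if s \<le> a then u1 s else u2 (s - a))) =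
      (\<lambda>s. indicator {0..a} s *\<^sub>R u1 s + indicator {a<..a+b} s *\<^sub>R (indicator {0..b} (-a + s) *\<^sub>R u2 (-a + s)))"
      using ab by (auto simp: fun_eq_iff indicator_def)
    have "(\<lambda>s. indicator {0..a+b} s *\<^sub>R (if s \<le> a then u1 s else u2 (s - a))) \<in> borel_measurable lebesgue"
      unfolding eq by (intro borel_measurable_add m1 m3)
    then show ?thesis by (subst borel_measurable_restrict_space_iff) auto
  qed
  show "AE s in lebesgue. s \<in> {0..a + b} \<longrightarrow>
      ((\<lambda>s. if s \<le> a then x1 s else x2 (s - a)) has_vector_derivative
        f (if s \<le> a then x1 s else x2 (s - a)) (if s \<le> a then u1 s else u2 (s - a))) (at s within {0..a + b})"
  proof -
    have e2: "AE s in lebesgue. -a + s \<in> {0..b} \<longrightarrow>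
        (x2 has_vector_derivative f (x2 (-a + s)) (u2 (-a + s))) (at (-a + s) within {0..b})"
      using P2(5) by (rule AE_translate)
    have "AE s in lborel. s \<noteq> (0::real)" "AE s in lborel. s \<noteq> (a::real)" "AE s in lborel. s \<noteq> (a + b::real)"
      by (rule AE_lborel_singleton)+
    then have e3: "AE s in lebesgue. s \<noteq> 0 \<and> s \<noteq> a \<and> s \<noteq> a + b"
      by (simp add: AE_completion_iff eventually_conj_iff)
    have "AE s in lebesgue. (s \<in> {0..a} \<longrightarrow>
        (x1 has_vector_derivative f (x1 s) (u1 s)) (at s within {0..a})) \<and>
        (-a + s \<in> {0..b} \<longrightarrow>
        (x2 has_vector_derivative f (x2 (-a + s)) (u2 (-a + s))) (at (-a + s) within {0..b})) \<and>
        (s \<noteq> 0 \<and> s \<noteq> a \<and> s \<noteq> a + b)"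
      using P1(5) e2 e3 by (simp add: eventually_conj_iff)
    then show ?thesis
    proof (rule eventually_mono, intro impI)
      fix s :: real
      assume H: "(s \<in> {0..a} \<longrightarrow>
        (x1 has_vector_derivative f (x1 s) (u1 s)) (at s within {0..a})) \<and>
        (-a + s \<in> {0..b} \<longrightarrow>
        (x2 has_vector_derivative f (x2 (-a + s)) (u2 (-a + s))) (at (-a + s) within {0..b})) \<and>
        (s \<noteq> 0 \<and> s \<noteq> a \<and> s \<noteq> a + b)" and s: "s \<in> {0..a+b}"
      show "((\<lambda>s. if s \<le> a then x1 s else x2 (s - a)) has_vector_derivative
        f (if s \<le> a then x1 s else x2 (s - a)) (if s \<le> a then u1 s else u2 (s - a))) (at s within {0..a + b})"
      proof (cases "s < a")
        case True
        with H s have s0: "0 < s" by auto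
        with True H have "(x1 has_vector_derivative f (x1 s) (u1 s)) (at s within {0..a})" by auto
        then have "(x1 has_vector_derivative f (x1 s) (u1 s)) (at s)"
          using at_within_Icc_at[OF s0 True] by simp
        then have "((\<lambda>s. if s \<le> a then x1 s else x2 (s - a)) has_vector_derivative f (x1 s) (u1 s)) (at s)"
          by (rule has_vector_derivative_transform_within_open[where S="{..<a}"]) (use True in auto)
        then show ?thesis using True by (auto intro: has_vector_derivative_at_within)
      next
        case False
        with H s have s1: "a < s" "s < a + b" by auto
        then have i: "0 < -a + s" "-a + s < b" by auto
        with H have "(x2 has_vector_derivative f (x2 (-a + s)) (u2 (-a + s))) (at (-a + s) within {0..b})"
          by auto
        then have "(x2 has_vector_derivative f (x2 (-a + s)) (u2 (-a + s))) (at (-a + s))"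
          using at_within_Icc_at[OF i] by simp
        then have "((x2 \<circ> (\<lambda>s. -a + s)) has_vector_derivative (1 *\<^sub>R f (x2 (-a + s)) (u2 (-a + s)))) (at s)"
          by (intro vector_diff_chain_at deriv_shift)
        then have "((x2 \<circ> (\<lambda>s. -a + s)) has_vector_derivative f (x2 (s - a)) (u2 (s - a))) (at s)"
          by simp
        then have "((\<lambda>s. if s \<le> a then x1 s else x2 (s - a)) has_vector_derivative f (x2 (s - a)) (u2 (s - a))) (at s)"
          by (rule has_vector_derivative_transform_within_open[where S="{a<..}"]) (use s1 in auto)
        then show ?thesis using s1 by (auto intro: has_vector_derivative_at_within)
      qed
    qed
  qed
qed

lemma mp_plus_ereal_add: "mp_plus (ereal (x + y)) z = mp_plus (ereal x) (mp_plus (ereal y) z)"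
  unfolding mp_plus_def by (cases z) auto

lemma DPP_le:
  assumes ab: "0 \<le> a" "0 \<le> b"
  shows "Ssem X U ell f (a + b) g x0 \<le> Ssem X U ell f a (Ssem X U ell f b g) x0"
  unfolding Ssem_SUP[of X U ell f "a + b"]
proof (rule SUP_least)
  fix q assume q: "q \<in> adm_set X U ell f (a + b) x0"
  obtain uu xx where qe: "q = (uu, xx)" by (cases q)
  have adm: "admissible X U f uu xx (a + b) x0"
    and I: "set_integrable lborel {0..a+b} (\<lambda>s. ell (xx s) (uu s))"
    using q by (auto simp: adm_set_def qe)
  note S = split_integral[OF ab I]
  have q1: "(uu, xx) \<in> adm_set X U ell f a x0"
    using adm_restrict[OF adm ab(1)] S(1) ab by (auto simp: adm_set_def)
  have q2: "((\<lambda>s. uu (a + s)), (\<lambda>s. xx (a + s))) \<in> adm_set X U ell f b (xx a)"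
    using adm_shift[OF adm ab] S(2) by (auto simp: adm_set_def)
  have "mp_plus (ereal (JJ ell (a + b) (fst q) (snd q))) (g (snd q (a + b)))
      = mp_plus (ereal (JJ ell a uu xx)) (mp_plus (ereal (JJ ell b (\<lambda>s. uu (a + s)) (\<lambda>s. xx (a + s)))) (g (xx (a + b))))"
    unfolding qe JJ_def using S(3) by (simp add: mp_plus_ereal_add)
  also have "\<dots> \<le> mp_plus (ereal (JJ ell a uu xx)) (Ssem X U ell f b g (xx a))"
    unfolding Ssem_SUP[of X U ell f b]
    by (rule mp_plus_mono[OF order_refl], rule SUP_upper2[OF q2]) simp
  also have "\<dots> \<le> Ssem X U ell f a (Ssem X U ell f b g) x0"
    unfolding Ssem_SUP[of X U ell f a _ x0]
    by (rule SUP_upper2[OF q1]) simp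
  finally show "mp_plus (ereal (JJ ell (a + b) (fst q) (snd q))) (g (snd q (a + b))) \<le> Ssem X U ell f a (Ssem X U ell f b g) x0" .
qed

lemma DPP_ge:
  assumes ab: "0 \<le> a" "0 \<le> b"
  shows "Ssem X U ell f a (Ssem X U ell f b g) x0 \<le> Ssem X U ell f (a + b) g x0"
  unfolding Ssem_SUP[of X U ell f a _ x0]
proof (rule SUP_least)
  fix q1 assume q1: "q1 \<in> adm_set X U ell f a x0"
  obtain u1 x1 where qe1: "q1 = (u1, x1)" by (cases q1)
  have adm1: "admissible X U f u1 x1 a x0"
    and I1: "set_integrable lborel {0..a} (\<lambda>s. ell (x1 s) (u1 s))"
    using q1 by (auto simp: adm_set_def qe1)
  show "mp_plus (ereal (JJ ell a (fst q1) (snd q1))) (Ssem X U ell f b g (snd q1 a)) \<le> Ssem X U ell f (a + b) g x0"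
    unfolding qe1 fst_conv snd_conv Ssem_SUP[of X U ell f b] mp_plus_SUP
  proof (rule SUP_least)
    fix q2 assume q2: "q2 \<in> adm_set X U ell f b (x1 a)"
    obtain u2 x2 where qe2: "q2 = (u2, x2)" by (cases q2)
    have adm2: "admissible X U f u2 x2 b (x1 a)"
      and I2: "set_integrable lborel {0..b} (\<lambda>s. ell (x2 s) (u2 s))"
      using q2 by (auto simp: adm_set_def qe2)
    define uu where "uu = (\<lambda>s. if s \<le> a then u1 s else u2 (s - a))"
    define xx where "xx = (\<lambda>s. if s \<le> a then x1 s else x2 (s - a))"
    have h: "ell (xx s) (uu s) = (if s \<le> a then ell (x1 s) (u1 s) else ell (x2 (s - a)) (u2 (s - a)))" for s
      by (simp add: xx_def uu_def)
    note C = concat_integral[OF ab I1 I2 h]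
    have q: "(uu, xx) \<in> adm_set X U ell f (a + b) x0"
      using adm_concat[OF adm1 adm2 ab] C(1) by (simp add: adm_set_def uu_def xx_def)
    have xab: "xx (a + b) = x2 b"
    proof (cases "b = 0")
      case True then show ?thesis using adm_parts(6)[OF adm2] by (simp add: xx_def)
    next
      case False then show ?thesis using ab by (simp add: xx_def)
    qed
    have "mp_plus (ereal (JJ ell a u1 x1)) (mp_plus (ereal (JJ ell b (fst q2) (snd q2))) (g (snd q2 b)))
        = mp_plus (ereal (JJ ell (a + b) uu xx)) (g (xx (a + b)))"
      unfolding qe2 JJ_def C(2) xab by (simp add: mp_plus_ereal_add)
    also have "\<dots> \<le> Ssem X U ell f (a + b) g x0"
      unfolding Ssem_SUP[of X U ell f "a + b"] by (rule SUP_upper2[OF q]) simp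
    finally show "mp_plus (ereal (JJ ell a u1 x1)) (mp_plus (ereal (JJ ell b (fst q2) (snd q2))) (g (snd q2 b)))
        \<le> Ssem X U ell f (a + b) g x0" .
  qed
qed

lemma DPP: "a \<ge> 0 \<Longrightarrow> b \<ge> 0 \<Longrightarrow> Ssem X U ell f (a + b) g = Ssem X U ell f a (Ssem X U ell f b g)"
  by (rule ext, rule antisym) (auto intro: DPP_le DPP_ge)

theorem lemma5p2:
  fixes X :: "(real^'n) set" and U :: "(real^'m) set"
    and ell :: "real^'n \<Rightarrow> real^'m \<Rightarrow> real"
    and f :: "real^'n \<Rightarrow> real^'m \<Rightarrow> real^'n"
    and T :: real and N :: nat and \<phi> :: "real^'n \<Rightarrow> ereal"
    and p q :: nat and w z :: "nat \<Rightarrow> real^'n \<Rightarrow> ereal"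
  assumes "T > 0" and "N \<ge> 1"
    and "\<forall>x\<in>X. \<phi> x \<noteq> \<infinity>"
    and "p \<ge> 1" and "q \<ge> 1"
    and "\<forall>i<p. \<forall>x\<in>X. w i x \<noteq> \<infinity>"
    and "\<forall>j<q. \<forall>x\<in>X. z j x \<noteq> \<infinity>"
  shows "sup_dist X (fem_value X U ell f (T / real N) p q w z \<phi> N) (Ssem X U ell f T \<phi>)
    \<le> sup_dist X (PW X p w (Ssem X U ell f 0 \<phi>)) (Ssem X U ell f 0 \<phi>)
       + (\<Sum>k\<in>{1..N}. sup_dist X
            (PW X p w (PZ X q z (Ssem X U ell f (real k * (T / real N)) \<phi>)))
            (Ssem X U ell f (real k * (T / real N)) \<phi>))"
proof -
  define d where "d = T / real N"
  have d: "d > 0" using assms(1,2) by (simp add: d_def)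
  have TN: "T = real N * d" using assms(1,2) by (simp add: d_def)
  define v where "v k = Ssem X U ell f (real k * d) \<phi>" for k :: nat
  define vh where "vh k = fem_value X U ell f d p q w z \<phi> k" for k
  define R where "R k = sup_dist X (PW X p w (PZ X q z (v k))) (v k)" for k
  define R0 where "R0 = sup_dist X (PW X p w (Ssem X U ell f 0 \<phi>)) (Ssem X U ell f 0 \<phi>)"
  have R0: "R0 \<ge> 0" unfolding R0_def by (rule sup_dist_nonneg)
  have Rn: "R k \<ge> 0" for k unfolding R_def by (rule sup_dist_nonneg)
  have key: "vh (Suc k) = PW X p w (PZ X q z (Ssem X U ell f d (vh k)))" for k
    unfolding vh_def by (rule key_identity[OF assms(4,5)])
  have main: "sup_dist X (vh N) (v N) \<le> R0 + (\<Sum>k\<in>{1..N}. R k)"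
  proof (cases "U = {}")
    case True
    obtain m where m: "N = Suc m" using assms(2) by (cases N) auto
    have "v k = (\<lambda>x. -\<infinity>)" for k unfolding v_def using d
      by (intro Ssem_empty[OF True]) simp
    moreover have "Ssem X U ell f d (vh m) = (\<lambda>x. -\<infinity>)"
      using d by (intro Ssem_empty[OF True]) simp
    ultimately have "sup_dist X (vh N) (v N) = R N"
      unfolding R_def m key by simp
    also have "\<dots> \<le> (\<Sum>k\<in>{1..N}. R k)"
      unfolding m sum.cl_ivl_Suc using sum_nonneg[of "{1..m}" R] Rn by (simp add: add_increasing)
    also have "\<dots> \<le> R0 + (\<Sum>k\<in>{1..N}. R k)" using R0 by (simp add: add_increasing)
    finally show ?thesis .
  next
    case False
    have "sup_dist X (vh k) (v k) \<le> R0 + (\<Sum>k\<in>{1..k}. R k)" for k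
    proof (induction k)
      case 0
      have "Wres X w \<phi> = Wres X w (Ssem X U ell f 0 \<phi>)"
        unfolding Wres_def by (auto intro!: INF_cong simp: Ssem_0[OF _ False] fun_eq_iff)
      then have "vh 0 = PW X p w (Ssem X U ell f 0 \<phi>)"
        unfolding vh_def fem_value_0 PW_def by simp
      then show ?case by (simp add: v_def R0_def)
    next
      case (Suc k)
      have vS: "v (Suc k) = Ssem X U ell f d (v k)"
        unfolding v_def using DPP[of d "real k * d" X U ell f \<phi>] d
        by (simp add: algebra_simps)
      have "sup_dist X (vh (Suc k)) (v (Suc k))
          \<le> sup_dist X (vh (Suc k)) (PW X p w (PZ X q z (v (Suc k)))) + R (Suc k)"
        unfolding R_def by (rule sup_dist_tri)
      also have "sup_dist X (vh (Suc k)) (PW X p w (PZ X q z (v (Suc k))))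
          \<le> sup_dist X (Ssem X U ell f d (vh k)) (v (Suc k))"
        unfolding key by (rule nonexp_sup_dist[OF nonexp_comp[OF nonexp_PW nonexp_PZ[OF assms(5)]]])
      also have "\<dots> \<le> sup_dist X (vh k) (v k)"
        unfolding vS by (rule nonexp_sup_dist[OF nonexp_Ssem]) (use d in simp)
      finally have "sup_dist X (vh (Suc k)) (v (Suc k)) \<le> sup_dist X (vh k) (v k) + R (Suc k)"
        by (simp add: add_right_mono)
      also have "\<dots> \<le> (R0 + (\<Sum>k\<in>{1..k}. R k)) + R (Suc k)"
        using Suc.IH by (simp add: add_right_mono)
      also have "\<dots> = R0 + (\<Sum>k\<in>{1..Suc k}. R k)"
        by (simp add: sum.atLeast_Suc_atMost_Suc_shift add.assoc)
      finally show ?case .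
    qed
    then show ?thesis .
  qed
  then show ?thesis
    unfolding vh_def v_def R_def R0_def d_def[symmetric] by (simp add: TN[symmetric])
qed

end
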